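(* Let $B\in\mathbb{R}^{p\times n}$, $\lambda_1,\lambda_2>0$, $l\le 0\le u$ in $\mathbb{R}^n$, $\Omega=\{x: l\le x\le u\}$ and $g(x)=\lambda_1\|Bx\|_0+\lambda_2\|x\|_0+\delta_\Omega(x)$. Let $\Xi\subset\mathbb{R}^n$ be compact and $0<\underline{\mu}<\overline{\mu}$ be constants, and define $$\mathcal{Z}=\bigcup_{z\in\Xi,\ \mu\in[\underline\mu,\overline\mu]}\mathrm{prox}_{\mu^{-1}g}(z).$$ Then there exists $\nu>0$ (depending on $\Xi,\underline\mu,\overline\mu$) such that $\inf_{u\in\mathcal{Z}\setminus\{0\}}|[B;I]u|_{\min}\ge\nu$.
   Context: $\|y\|_0$ is the number of nonzero entries of $y$, $\mathrm{supp}(y)=\{i:y_i\ne0\}$, and $|y|_{\min}=\min_{i\in\mathrm{supp}(y)}|y_i|$. $\delta_\Omega$ is the indicator of $\Omega$. $[B;I]\in\mathbb{R}^{(p+n)\times n}$ is $B$ stacked on top of the $n\times n$ identity. For $\mu>0$, $\mathrm{prox}_{\mu g}(z)=\arg\min_x\{\frac{1}{2\mu}\|x-z\|^2+g(x)\}$. *)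

theory Defs
  imports "HOL-Analysis.Analysis" "HOL-Library.Extended_Real"
begin

definition l0norm :: "real ^ 'k \<Rightarrow> nat" where
  "l0norm y = card {i. y $ i \<noteq> 0}"

definition absmin :: "real ^ 'k \<Rightarrow> real" where
  "absmin y = Min {\<bar>y $ i\<bar> | i. y $ i \<noteq> 0}"

definition stackBI :: "real ^ 'n ^ 'p \<Rightarrow> real ^ 'n \<Rightarrow> real ^ ('p + 'n)" where
  "stackBI B u = (\<chi> k. case k of Inl i \<Rightarrow> (B *v u) $ i | Inr j \<Rightarrow> u $ j)"

definition box_set :: "real ^ 'n \<Rightarrow> real ^ 'n \<Rightarrow> (real ^ 'n) set" where
  "box_set l u = {x. \<forall>i. l $ i \<le> x $ i \<and> x $ i \<le> u $ i}"

definition indicator_ext :: "'a set \<Rightarrow> 'a \<Rightarrow> ereal" where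
  "indicator_ext S x = (if x \<in> S then 0 else \<infinity>)"

definition gfun :: "real ^ 'n ^ 'p \<Rightarrow> real \<Rightarrow> real \<Rightarrow> real ^ 'n \<Rightarrow> real ^ 'n \<Rightarrow> real ^ 'n \<Rightarrow> ereal" where
  "gfun B lam1 lam2 l u x =
     ereal (lam1 * real (l0norm (B *v x)) + lam2 * real (l0norm x)) + indicator_ext (box_set l u) x"

definition prox :: "real \<Rightarrow> ('a::real_normed_vector \<Rightarrow> ereal) \<Rightarrow> 'a \<Rightarrow> 'a set" where
  "prox mu g z = {x. \<forall>y. ereal (1 / (2 * mu) * (norm (x - z))\<^sup>2) + g x
                          \<le> ereal (1 / (2 * mu) * (norm (y - z))\<^sup>2) + g y}"

end

theory Submission
  imports Defs
begin

lemma prox_opt: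
  fixes B :: "real ^ 'n ^ 'p"
  assumes mu: "mu > 0" and v: "v \<in> prox (1/mu) (gfun B lam1 lam2 l u) z" and y: "y \<in> box_set l u"
  shows "v \<in> box_set l u \<and> mu/2 * (norm (v - z))\<^sup>2 + (lam1 * real (l0norm (B *v v)) + lam2 * real (l0norm v))
     \<le> mu/2 * (norm (y - z))\<^sup>2 + (lam1 * real (l0norm (B *v y)) + lam2 * real (l0norm y))"
proof -
  have "ereal (1 / (2 * (1/mu)) * (norm (v - z))\<^sup>2) + gfun B lam1 lam2 l u v
        \<le> ereal (1 / (2 * (1/mu)) * (norm (y - z))\<^sup>2) + gfun B lam1 lam2 l u y"
    using v unfolding prox_def by blast
  moreover have e: "1 / (2 * (1/mu)) = mu/2" using mu by simp
  ultimately have H: "ereal (mu/2 * (norm (v - z))\<^sup>2) + gfun B lam1 lam2 l u v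
        \<le> ereal (mu/2 * (norm (y - z))\<^sup>2) + gfun B lam1 lam2 l u y" by simp
  have vb: "v \<in> box_set l u"
  proof (rule ccontr)
    assume "v \<notin> box_set l u"
    then have "gfun B lam1 lam2 l u v = \<infinity>" unfolding gfun_def indicator_ext_def by simp
    with H y show False unfolding gfun_def indicator_ext_def by simp
  qed
  show ?thesis using H vb y unfolding gfun_def indicator_ext_def by simp
qed

lemma absmin_attained:
  fixes w :: "real ^ 'k"
  assumes "w \<noteq> 0"
  shows "\<exists>j. w $ j \<noteq> 0 \<and> \<bar>w $ j\<bar> = absmin w"
proof -
  have fin: "finite {\<bar>w $ i\<bar> | i. w $ i \<noteq> 0}" by simp
  obtain i where "w $ i \<noteq> 0" using assms by (metis vec_eq_iff zero_index)
  then have ne: "{\<bar>w $ i\<bar> | i. w $ i \<noteq> 0} \<noteq> {}" by blast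
  have "absmin w \<in> {\<bar>w $ i\<bar> | i. w $ i \<noteq> 0}" unfolding absmin_def using Min_in[OF fin ne] .
  then show ?thesis by auto
qed

lemma l0_zero: "l0norm (0 :: real ^ 'k) = 0" unfolding l0norm_def by simp
lemma stackBI_Inl[simp]: "stackBI B v $ Inl i = (B *v v) $ i" unfolding stackBI_def by simp
lemma stackBI_Inr[simp]: "stackBI B v $ Inr j = v $ j" unfolding stackBI_def by simp

lemma supp_strict:
  fixes B :: "real ^ 'n ^ 'p"
  assumes sub: "\<forall>i. stackBI B xs $ i \<noteq> 0 \<longrightarrow> stackBI B x $ i \<noteq> 0"
    and j: "stackBI B xs $ j = 0" "stackBI B x $ j \<noteq> 0"
    and lam: "lam1 > 0" "lam2 > 0"
  shows "(lam1 * real (l0norm (B *v xs)) + lam2 * real (l0norm xs)) + min lam1 lam2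
     \<le> lam1 * real (l0norm (B *v x)) + lam2 * real (l0norm x)"
proof -
  have s1: "{i. (B *v xs) $ i \<noteq> 0} \<subseteq> {i. (B *v x) $ i \<noteq> 0}"
    using sub by (metis (mono_tags, lifting) Collect_mono stackBI_Inl)
  have s2: "{i. xs $ i \<noteq> 0} \<subseteq> {i. x $ i \<noteq> 0}"
    using sub by (metis (mono_tags, lifting) Collect_mono stackBI_Inr)
  have c1: "l0norm (B *v xs) \<le> l0norm (B *v x)" unfolding l0norm_def by (rule card_mono[OF _ s1]) simp
  have c2: "l0norm xs \<le> l0norm x" unfolding l0norm_def by (rule card_mono[OF _ s2]) simp
  show ?thesis
  proof (cases j)
    case (Inl a)
    then have "{i. (B *v xs) $ i \<noteq> 0} \<subset> {i. (B *v x) $ i \<noteq> 0}" using s1 j by auto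
    then have "l0norm (B *v xs) < l0norm (B *v x)" unfolding l0norm_def by (rule psubset_card_mono[rotated]) simp
    then have "real (l0norm (B *v xs)) + 1 \<le> real (l0norm (B *v x))" by linarith
    then have "lam1 * real (l0norm (B *v xs)) + lam1 \<le> lam1 * real (l0norm (B *v x))"
      using lam by (metis distrib_left mult.right_neutral mult_le_cancel_left_pos)
    moreover have "lam2 * real (l0norm xs) \<le> lam2 * real (l0norm x)" using c2 lam by simp
    ultimately show ?thesis by linarith
  next
    case (Inr a)
    then have "{i. xs $ i \<noteq> 0} \<subset> {i. x $ i \<noteq> 0}" using s2 j by auto
    then have "l0norm xs < l0norm x" unfolding l0norm_def by (rule psubset_card_mono[rotated]) simp
    then have "real (l0norm xs) + 1 \<le> real (l0norm x)" by linarith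
    then have "lam2 * real (l0norm xs) + lam2 \<le> lam2 * real (l0norm x)"
      using lam by (metis distrib_left mult.right_neutral mult_le_cancel_left_pos)
    moreover have "lam1 * real (l0norm (B *v xs)) \<le> lam1 * real (l0norm (B *v x))" using c1 lam by simp
    ultimately show ?thesis by linarith
  qed
qed

lemma sq_diff_bound:
  fixes a b c :: "'a::real_normed_vector"
  assumes "norm (a - c) \<le> K" "norm (b - c) \<le> K"
  shows "(norm (b - c))\<^sup>2 - (norm (a - c))\<^sup>2 \<le> norm (a - b) * (2 * K)"
proof -
  have d: "norm (b - c) - norm (a - c) \<le> norm (a - b)"
    by (metis norm_minus_commute norm_triangle_ineq2 diff_diff_eq2 diff_add_cancel add_diff_cancel_right' order_trans norm_triangle_sub)
  have "(norm (b - c))\<^sup>2 - (norm (a - c))\<^sup>2 = (norm (b - c) - norm (a - c)) * (norm (b - c) + norm (a - c))"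
    by (simp add: power2_eq_square algebra_simps)
  also have "\<dots> \<le> norm (a - b) * (2 * K)"
  proof (cases "norm (b - c) - norm (a - c) \<ge> 0")
    case True
    then show ?thesis using d assms by (intro mult_mono) auto
  next
    case False
    then have "(norm (b - c) - norm (a - c)) * (norm (b - c) + norm (a - c)) \<le> 0"
      by (simp add: mult_nonpos_nonneg)
    also have "0 \<le> norm (a - b) * (2 * K)" using assms by (metis mult_nonneg_nonneg norm_ge_zero order_trans mult_2 add_nonneg_nonneg)
    finally show ?thesis .
  qed
  finally show ?thesis .
qed
theorem lemma3p2:
  fixes B :: "real ^ 'n ^ 'p"
    and lam1 lam2 mu_lo mu_hi :: real
    and l u :: "real ^ 'n"
    and Xi :: "(real ^ 'n) set"
  assumes "lam1 > 0" and "lam2 > 0"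
    and "\<forall>i. l $ i \<le> 0 \<and> 0 \<le> u $ i"
    and "compact Xi"
    and "0 < mu_lo" and "mu_lo < mu_hi"
  shows "\<exists>\<nu>>0. \<forall>v \<in> (\<Union>z\<in>Xi. \<Union>mu\<in>{mu_lo..mu_hi}. prox (1 / mu) (gfun B lam1 lam2 l u) z) - {0}.
            absmin (stackBI B v) \<ge> \<nu>"
proof (rule ccontr)
  assume H: "\<not> ?thesis"
  define g where "g = gfun B lam1 lam2 l u"
  define hf where "hf = (\<lambda>v. lam1 * real (l0norm (B *v v)) + lam2 * real (l0norm v))"
  have ex: "\<forall>k::nat. \<exists>v z mu. z \<in> Xi \<and> mu \<in> {mu_lo..mu_hi} \<and> v \<in> prox (1/mu) g z \<and> v \<noteq> 0
     \<and> absmin (stackBI B v) < 1/(real k + 1)"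
  proof
    fix k :: nat
    have pos: "1/(real k+1) > 0" by simp
    then have "\<exists>v \<in> (\<Union>z\<in>Xi. \<Union>mu\<in>{mu_lo..mu_hi}. prox (1 / mu) (gfun B lam1 lam2 l u) z) - {0}.
            absmin (stackBI B v) < 1/(real k+1)" using H by (meson not_le)
    then show "\<exists>v z mu. z \<in> Xi \<and> mu \<in> {mu_lo..mu_hi} \<and> v \<in> prox (1/mu) g z \<and> v \<noteq> 0
     \<and> absmin (stackBI B v) < 1/(real k + 1)" unfolding g_def by blast
  qed
  then obtain X Z M where XZM: "\<And>k. Z k \<in> Xi \<and> M k \<in> {mu_lo..mu_hi} \<and> X k \<in> prox (1/M k) g (Z k) \<and> X k \<noteq> 0
     \<and> absmin (stackBI B (X k)) < 1/(real k + 1)" by metis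
  obtain a where a: "\<forall>x\<in>Xi. norm x \<le> a" using compact_imp_bounded[OF assms(4)] bounded_iff by blast
  define Mb where "Mb = max a 0"
  have Mb: "\<And>k. norm (Z k) \<le> Mb" "Mb \<ge> 0" using a XZM unfolding Mb_def by (auto intro: le_max_iff_disj[THEN iffD2])
  have zb: "0 \<in> box_set l u" using assms(3) unfolding box_set_def by simp
  have Mpos: "\<And>k. M k > 0" "\<And>k. M k \<le> mu_hi" using XZM assms(5) by (auto intro: less_le_trans)
  have opt: "\<And>k y. y \<in> box_set l u \<Longrightarrow> X k \<in> box_set l u \<and> M k/2 * (norm (X k - Z k))\<^sup>2 + hf (X k)
     \<le> M k/2 * (norm (y - Z k))\<^sup>2 + hf y"
    unfolding hf_def using prox_opt[OF Mpos(1)] XZM unfolding g_def by blast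
  have hf0: "hf 0 = 0" unfolding hf_def by (simp add: l0_zero)
  have hfnn: "\<And>v. hf v \<ge> 0" unfolding hf_def using assms(1,2) by simp
  have dist1: "\<And>k. norm (X k - Z k) \<le> Mb"
  proof -
    fix k
    have "M k/2 * (norm (X k - Z k))\<^sup>2 \<le> M k/2 * (norm (Z k))\<^sup>2"
      using opt[OF zb, of k] hf0 hfnn[of "X k"] by simp
    then have "(norm (X k - Z k))\<^sup>2 \<le> (norm (Z k))\<^sup>2" using Mpos(1)[of k] by simp
    then have "norm (X k - Z k) \<le> norm (Z k)" by (simp add: power_mono_iff)
    then show "norm (X k - Z k) \<le> Mb" using Mb(1)[of k] by linarith
  qed
  have Xb: "\<And>k. X k \<in> cball 0 (2*Mb)"
  proof -
    fix k
    have "norm (X k) \<le> norm (X k - Z k) + norm (Z k)" using norm_triangle_ineq[of "X k - Z k" "Z k"] by simp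
    then show "X k \<in> cball 0 (2*Mb)" using dist1[of k] Mb(1)[of k] by simp
  qed
  obtain xs r where xs: "xs \<in> cball 0 (2*Mb)" "strict_mono (r :: nat \<Rightarrow> nat)" "(X \<circ> r) \<longlonglongrightarrow> xs"
    using seq_compactE[OF compact_imp_seq_compact[OF compact_cball] ] Xb by metis
  have xsb: "xs \<in> box_set l u"
  proof -
    have "l $ i \<le> xs $ i \<and> xs $ i \<le> u $ i" for i
    proof -
      have t: "(\<lambda>k. X (r k) $ i) \<longlonglongrightarrow> xs $ i" using xs(3) by (intro tendsto_vec_nth) (simp add: comp_def)
      have "\<And>k. X (r k) \<in> box_set l u" using opt[OF zb] by blast
      then have "\<And>k. l $ i \<le> X (r k) $ i \<and> X (r k) $ i \<le> u $ i" unfolding box_set_def by blast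
      then show ?thesis using LIMSEQ_le_const[OF t] LIMSEQ_le_const2[OF t] by blast
    qed
    then show ?thesis unfolding box_set_def by blast
  qed
  define ys where "ys = stackBI B xs"
  have Yt: "(\<lambda>k. stackBI B (X (r k)) $ i) \<longlonglongrightarrow> ys $ i" for i
  proof (cases i)
    case (Inl a)
    have "(\<lambda>k. B *v X (r k)) \<longlonglongrightarrow> B *v xs"
      using bounded_linear.tendsto[OF matrix_vector_mul_bounded_linear xs(3)] by (simp add: comp_def)
    then show ?thesis unfolding ys_def Inl by (simp add: tendsto_vec_nth)
  next
    case (Inr a)
    show ?thesis unfolding ys_def Inr using xs(3) by (simp add: tendsto_vec_nth comp_def)
  qed
  define \<delta> where "\<delta> = Min (insert 1 {\<bar>ys $ i\<bar> / 2 | i. ys $ i \<noteq> 0})"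
  have finS: "finite {\<bar>ys $ i\<bar> / 2 | i. ys $ i \<noteq> 0}"
    by (rule finite_subset[of _ "(\<lambda>i. \<bar>ys $ i\<bar> / 2) ` UNIV"]) auto
  have \<delta>pos: "\<delta> > 0" unfolding \<delta>_def using finS by (subst Min_gr_iff) auto
  have \<delta>le: "\<And>i. ys $ i \<noteq> 0 \<Longrightarrow> \<delta> \<le> \<bar>ys $ i\<bar> / 2" unfolding \<delta>_def using finS by (intro Min_le) auto
  have ev1: "\<forall>\<^sub>F k in sequentially. \<forall>i. ys $ i \<noteq> 0 \<longrightarrow> \<bar>stackBI B (X (r k)) $ i - ys $ i\<bar> < \<bar>ys $ i\<bar> / 2"
  proof (rule eventually_all_finite)
    fix i
    show "\<forall>\<^sub>F k in sequentially. ys $ i \<noteq> 0 \<longrightarrow> \<bar>stackBI B (X (r k)) $ i - ys $ i\<bar> < \<bar>ys $ i\<bar> / 2"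
    proof (cases "ys $ i = 0")
      case False
      then have "\<bar>ys $ i\<bar> / 2 > 0" by simp
      from tendstoD[OF Yt[of i] this] show ?thesis by (simp add: dist_real_def)
    qed simp
  qed
  obtain K where K0: "inverse (real (Suc K)) < \<delta>" using reals_Archimedean[OF \<delta>pos] by blast
  then have K: "1 / (real K + 1) < \<delta>" by (simp add: inverse_eq_divide add.commute)
  have ev2: "\<forall>\<^sub>F k in sequentially. k \<ge> K" by (rule eventually_ge_at_top)
  define m where "m = min lam1 lam2"
  have mpos: "m > 0" unfolding m_def using assms(1,2) by simp
  define \<epsilon> where "\<epsilon> = m / (mu_hi * (3 * Mb + 1) * 3)"
  have epos: "\<epsilon> > 0" unfolding \<epsilon>_def using mpos Mb(2) Mpos(1)[of 0] Mpos(2)[of 0] by simp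
  have ev3: "\<forall>\<^sub>F k in sequentially. norm (X (r k) - xs) < \<epsilon>"
    using tendstoD[OF xs(3) epos] by (simp add: dist_norm comp_def)
  obtain k where k1: "\<forall>i. ys $ i \<noteq> 0 \<longrightarrow> \<bar>stackBI B (X (r k)) $ i - ys $ i\<bar> < \<bar>ys $ i\<bar> / 2"
     and k2: "k \<ge> K" and k3: "norm (X (r k) - xs) < \<epsilon>"
    using eventually_conj[OF ev1 eventually_conj[OF ev2 ev3]] unfolding eventually_sequentially by blast
  define x where "x = X (r k)"
  have sub: "\<forall>i. ys $ i \<noteq> 0 \<longrightarrow> stackBI B x $ i \<noteq> 0" using k1 unfolding x_def by force
  have "stackBI B x \<noteq> 0"
  proof -
    obtain j where "x $ j \<noteq> 0" using XZM[of "r k"] unfolding x_def by (metis vec_eq_iff zero_index)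
    then show ?thesis by (metis stackBI_Inr zero_index)
  qed
  then obtain j where j: "stackBI B x $ j \<noteq> 0" "\<bar>stackBI B x $ j\<bar> = absmin (stackBI B x)"
    using absmin_attained by blast
  have "absmin (stackBI B x) < 1/(real (r k) + 1)" using XZM unfolding x_def by blast
  also have "\<dots> \<le> 1 / (real K + 1)" using seq_suble[OF xs(2), of k] k2 by (simp add: frac_le)
  finally have small: "\<bar>stackBI B x $ j\<bar> < \<delta>" using K j by linarith
  have ysj: "ys $ j = 0"
  proof (rule ccontr)
    assume "ys $ j \<noteq> 0"
    then have "\<bar>stackBI B x $ j - ys $ j\<bar> < \<bar>ys $ j\<bar> / 2" "\<delta> \<le> \<bar>ys $ j\<bar> / 2"
      using k1 \<delta>le unfolding x_def by auto
    then show False using small by linarith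
  qed
  have A: "hf xs + m \<le> hf x" unfolding hf_def m_def
    using supp_strict[OF sub[unfolded ys_def] ysj[unfolded ys_def] j(1) assms(1,2)] .
  have opk: "M (r k)/2 * (norm (x - Z (r k)))\<^sup>2 + hf x \<le> M (r k)/2 * (norm (xs - Z (r k)))\<^sup>2 + hf xs"
    using opt[OF xsb] unfolding x_def by blast
  have n1: "norm (x - Z (r k)) \<le> 3*Mb + 1" using dist1[of "r k"] Mb(2) unfolding x_def by linarith
  have n2: "norm (xs - Z (r k)) \<le> 3*Mb + 1"
  proof -
    have "norm (xs - Z (r k)) \<le> norm xs + norm (Z (r k))" by (rule norm_triangle_ineq4)
    then show ?thesis using xs(1) Mb(1)[of "r k"] by simp
  qed
  have sq: "(norm (xs - Z (r k)))\<^sup>2 - (norm (x - Z (r k)))\<^sup>2 \<le> norm (x - xs) * (2 * (3*Mb + 1))"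
    by (rule sq_diff_bound[OF n1 n2])
  have "hf x - hf xs \<le> M (r k)/2 * ((norm (xs - Z (r k)))\<^sup>2 - (norm (x - Z (r k)))\<^sup>2)"
    using opk by (simp add: algebra_simps)
  also have "\<dots> \<le> M (r k)/2 * (norm (x - xs) * (2 * (3*Mb + 1)))"
    using sq Mpos(1)[of "r k"] by (intro mult_left_mono) auto
  also have "\<dots> \<le> mu_hi/2 * (\<epsilon> * (2 * (3*Mb + 1)))"
    using Mpos[of "r k"] k3 Mb(2) epos unfolding x_def
    by (intro mult_mono) (auto intro: mult_nonneg_nonneg)
  also have "\<dots> = m / 3"
  proof -
    have hp: "mu_hi * (3*Mb + 1) > 0" using Mpos(1)[of 0] Mpos(2)[of 0] Mb(2) by simp
    have "mu_hi/2 * (\<epsilon> * (2 * (3*Mb + 1))) = (mu_hi * (3*Mb + 1)) * \<epsilon>" by simp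
    also have "\<dots> = m / 3" unfolding \<epsilon>_def using hp by (simp add: field_simps)
    finally show ?thesis .
  qed
  finally show False using A mpos by linarith
qed

end
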